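(* In the general setting of the context, let $(x_1^*,\dots,x_n^* )$ be an optimal solution attaining $P^*$ together with a vector $y^*\in\mathbb{R}^m_+$ such that $y^*_i=0$ whenever $(\sum_tA_tx^*_t)_i<b_i$ and $A_t^\top y^*$ is a supergradient of $f_t$ at $x_t^*$ for every $t$. For $t\in[n]$ let $$S_t=\frac{1}{n-t+1}\sum_{s=t}^nf_{\sigma(s)}(x^*_{\sigma(s)})-\frac{P^*}{n}.$$ Then $$\mathbb{P}\Big(\exists\,t\in[n(1-\epsilon)]:\ S_t<-\frac{P^*}{n}2^{-\kappa(t)/2}\epsilon^{1/2}\Big)\le L\exp\Big(-\frac{\epsilon^2}{4\gamma}\Big).$$
   Context: General setting. Let $m,k,n$ be positive integers and $b\in\mathbb{R}^m_{++}$. Let $\mathcal G$ be the set of proper, concave, upper semicontinuous functions $f:\mathbb{R}^k\to[-\infty,\infty)$ with bounded superlevel sets such that $\mathrm{dom} f\subset\mathbb{R}^k_+$ and $f(0)=0$. Let $f_1,\dots,f_n\in\mathcal G$ and $A_1,\dots,A_n\in\mathbb{R}_+^{m\times k}$. Let $P^*=\sup\{\sum_{t=1}^n f_t(x_t): x_t\in\mathbb{R}^k,\ \sum_{t=1}^n A_tx_t\le b\}$ and assume $P^*>0$. Let $\gamma>0$ satisfy, for every $t\in[n]$: $(A_tx)_i/b_i\le\gamma$ for all $i\in[m]$ and all $x$ with $f_t(x)\ge0$, and $f_t(x)\le\gamma P^*$ for all $x\in\mathrm{dom} f_t$. Let $\epsilon\in(0,1)$ be such that $L=\log_2(1/\epsilon)$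 and $n\epsilon$ are integers. Let $\sigma$ be a uniformly random permutation of $[n]$; probabilities are over $\sigma$. For $t\in[n(1-\epsilon)]$, $\kappa(t)=\lfloor\log_2\frac{n-t}{n\epsilon}\rfloor+1$, i.e. $\kappa(t)=k\in[L]$ iff $n(1-2^k\epsilon)<t\le n(1-2^{k-1}\epsilon)$. *)

theory Defs
  imports "HOL-Analysis.Analysis" "HOL-Probability.Probability"
begin

text \<open>Functions R^k -> [-infinity, infinity) are modelled as maps into ereal that
  never take the value +infinity.  The effective domain is the set where the value
  is not -infinity.\<close>

definition hypo :: "('a \<Rightarrow> ereal) \<Rightarrow> ('a \<times> real) set" where
  "hypo f = {(x, r). ereal r \<le> f x}"

definition proper_concave_fn :: "('a::real_vector \<Rightarrow> ereal) \<Rightarrow> bool" where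
  "proper_concave_fn f \<longleftrightarrow> (\<forall>x. f x \<noteq> \<infinity>) \<and> (\<exists>x. f x \<noteq> -\<infinity>) \<and> convex (hypo f)"

definition usc_fn :: "('a::topological_space \<Rightarrow> ereal) \<Rightarrow> bool" where
  "usc_fn f \<longleftrightarrow> (\<forall>c::ereal. closed {x. c \<le> f x})"

definition bounded_superlevel :: "('a::metric_space \<Rightarrow> ereal) \<Rightarrow> bool" where
  "bounded_superlevel f \<longleftrightarrow> (\<forall>c::real. bounded {x. ereal c \<le> f x})"

definition edom :: "('a \<Rightarrow> ereal) \<Rightarrow> 'a set" where
  "edom f = {x. f x \<noteq> -\<infinity>}"

definition classG :: "(real^'k \<Rightarrow> ereal) \<Rightarrow> bool" where
  "classG f \<longleftrightarrow> proper_concave_fn f \<and> usc_fn f \<and> bounded_superlevel f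
     \<and> edom f \<subseteq> {x. \<forall>i. 0 \<le> x $ i} \<and> f 0 = 0"

definition feasible :: "nat \<Rightarrow> (nat \<Rightarrow> real^'k^'m) \<Rightarrow> real^'m \<Rightarrow> (nat \<Rightarrow> real^'k) \<Rightarrow> bool" where
  "feasible n A b x \<longleftrightarrow> (\<forall>i. (\<Sum>t\<in>{1..n}. A t *v x t) $ i \<le> b $ i)"

definition Pstar :: "nat \<Rightarrow> (nat \<Rightarrow> real^'k \<Rightarrow> ereal) \<Rightarrow> (nat \<Rightarrow> real^'k^'m) \<Rightarrow> real^'m \<Rightarrow> ereal" where
  "Pstar n f A b = (SUP x \<in> {x. feasible n A b x}. \<Sum>t\<in>{1..n}. f t (x t))"

definition kappa :: "nat \<Rightarrow> real \<Rightarrow> nat \<Rightarrow> int" where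
  "kappa n \<epsilon> t = \<lfloor>log 2 ((real n - real t) / (real n * \<epsilon>))\<rfloor> + 1"

definition S_stat :: "nat \<Rightarrow> (nat \<Rightarrow> real^'k \<Rightarrow> ereal) \<Rightarrow> (nat \<Rightarrow> real^'k) \<Rightarrow> real \<Rightarrow> (nat \<Rightarrow> nat) \<Rightarrow> nat \<Rightarrow> real" where
  "S_stat n f xs P \<sigma> t =
     (1 / (real n - real t + 1)) * (\<Sum>s\<in>{t..n}. real_of_ereal (f (\<sigma> s) (xs (\<sigma> s)))) - P / real n"

end

theory Submission
  imports Defs "HOL-Combinatorics.Multiset_Permutations"
begin



lemma sum_perms_cons:
  assumes "finite W" "W \<noteq> {}"
  shows "(\<Sum>ls\<in>permutations_of_set W. F ls) = (\<Sum>x\<in>W. \<Sum>ls\<in>permutations_of_set (W-{x}). F (x#ls))"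
proof -
  have "(\<Sum>ls\<in>permutations_of_set W. F ls) = (\<Sum>ls\<in>(\<Union>x\<in>W. (\<lambda>xs. x # xs) ` permutations_of_set (W - {x})). F ls)"
    using permutations_of_set_nonempty[OF assms(2)] by simp
  also have "\<dots> = (\<Sum>x\<in>W. \<Sum>ls\<in>(\<lambda>xs. x # xs) ` permutations_of_set (W - {x}). F ls)"
    by (rule sum.UNION_disjoint) (use assms(1) in auto)
  also have "\<dots> = (\<Sum>x\<in>W. \<Sum>ls\<in>permutations_of_set (W-{x}). F (x#ls))"
    by (rule sum.cong[OF refl], subst sum.reindex) (auto simp: inj_on_def)
  finally show ?thesis .
qed

lemma exp_sum_ge:
  fixes z :: "'a \<Rightarrow> real"
  assumes "finite W" "W \<noteq> {}"
  shows "real (card W) * exp ((\<Sum>x\<in>W. z x) / real (card W)) \<le> (\<Sum>x\<in>W. exp (z x))"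
proof -
  define c where "c = (\<Sum>x\<in>W. z x) / real (card W)"
  have N: "real (card W) > 0" using assms by (simp add: card_gt_0_iff)
  have "\<And>x. exp c * (1 + (z x - c)) \<le> exp (z x)"
  proof -
    fix x have "1 + (z x - c) \<le> exp (z x - c)" by (rule exp_ge_add_one_self)
    then have "exp c * (1 + (z x - c)) \<le> exp c * exp (z x - c)" by simp
    thus "exp c * (1 + (z x - c)) \<le> exp (z x)" by (simp add: exp_diff)
  qed
  then have "(\<Sum>x\<in>W. exp c * (1 + (z x - c))) \<le> (\<Sum>x\<in>W. exp (z x))" by (rule sum_mono)
  moreover have "(\<Sum>x\<in>W. exp c * (1 + (z x - c))) = exp c * (real (card W) + (\<Sum>x\<in>W. z x) - real (card W) * c)"
    by (simp add: sum_distrib_left[symmetric] sum.distrib sum_subtractf)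
  moreover have "real (card W) * c = (\<Sum>x\<in>W. z x)" using N by (simp add: c_def)
  ultimately show ?thesis by (simp add: c_def mult.commute)
qed




fun badl :: "(nat \<Rightarrow> real) \<Rightarrow> nat \<Rightarrow> real \<Rightarrow> nat list \<Rightarrow> bool" where
  "badl v a thr [] = False"
| "badl v a thr (x#xs) = ((a \<le> Suc (length xs) \<and> sum_list (map v (x#xs)) < thr * real (Suc (length xs))) \<or> badl v a thr xs)"

lemma badl_short: "length ls < a \<Longrightarrow> \<not> badl v a thr ls"
  by (induction ls) auto

definition sumlast :: "(nat \<Rightarrow> real) \<Rightarrow> nat \<Rightarrow> nat list \<Rightarrow> real" where
  "sumlast v a ls = sum_list (map v (drop (length ls - a) ls))"

lemma perm_sum_list:
  "ls \<in> permutations_of_set W \<Longrightarrow> sum_list (map v ls) = (\<Sum>x\<in>W. v x)"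
  by (auto simp: permutations_of_set_def sum_list_distinct_conv_sum_set)

lemma sumlast_cons: "a \<le> length ls \<Longrightarrow> sumlast v a (x#ls) = sumlast v a ls"
  by (simp add: sumlast_def Suc_diff_le)

lemma jensen_perm:
  fixes v :: "nat \<Rightarrow> real"
  assumes "1 \<le> a"
  shows "finite W \<Longrightarrow> card W = N \<Longrightarrow> a \<le> N \<Longrightarrow>
    fact N * exp (- lam * real a * (\<Sum>x\<in>W. v x) / real N)
     \<le> (\<Sum>ls\<in>permutations_of_set W. exp (- lam * sumlast v a ls))"
proof (induction N arbitrary: W rule: less_induct)
  case (less N)
  show ?case
  proof (cases "N = a")
    case True
    have "\<And>ls. ls \<in> permutations_of_set W \<Longrightarrow> sumlast v a ls = (\<Sum>x\<in>W. v x)"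
      using True less.prems by (simp add: sumlast_def length_finite_permutations_of_set perm_sum_list)
    then have "(\<Sum>ls\<in>permutations_of_set W. exp (- lam * sumlast v a ls)) = fact N * exp (- lam * (\<Sum>x\<in>W. v x))"
      using less.prems by simp
    then show ?thesis using True assms by simp
  next
    case False
    then have Nbig: "a < N" using less.prems by simp
    then have Wne: "W \<noteq> {}" using less.prems assms by auto
    obtain M where M: "N = Suc M" using Nbig by (cases N) auto
    have cardx: "\<And>x. x \<in> W \<Longrightarrow> card (W - {x}) = M" using less.prems M by simp
    have IH: "\<And>x. x \<in> W \<Longrightarrow> fact M * exp (- lam * real a * (\<Sum>y\<in>W-{x}. v y) / real M)
     \<le> (\<Sum>ls\<in>permutations_of_set (W-{x}). exp (- lam * sumlast v a ls))"
      using less.IH[of M] M Nbig less.prems cardx by auto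
    have "(\<Sum>ls\<in>permutations_of_set W. exp (- lam * sumlast v a ls))
        = (\<Sum>x\<in>W. \<Sum>ls\<in>permutations_of_set (W-{x}). exp (- lam * sumlast v a (x#ls)))"
      by (rule sum_perms_cons[OF less.prems(1) Wne])
    also have "\<dots> = (\<Sum>x\<in>W. \<Sum>ls\<in>permutations_of_set (W-{x}). exp (- lam * sumlast v a ls))"
      apply (rule sum.cong[OF refl], rule sum.cong[OF refl])
      using cardx M Nbig by (subst sumlast_cons) (auto simp: length_finite_permutations_of_set)
    also have "\<dots> \<ge> (\<Sum>x\<in>W. fact M * exp (- lam * real a * (\<Sum>y\<in>W-{x}. v y) / real M))"
      by (rule sum_mono) (rule IH)
    finally have 1: "(\<Sum>x\<in>W. fact M * exp (- lam * real a * (\<Sum>y\<in>W-{x}. v y) / real M))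
       \<le> (\<Sum>ls\<in>permutations_of_set W. exp (- lam * sumlast v a ls))" .
    have 2: "real (card W) * exp ((\<Sum>x\<in>W. - lam * real a * (\<Sum>y\<in>W-{x}. v y) / real M) / real (card W))
      \<le> (\<Sum>x\<in>W. exp (- lam * real a * (\<Sum>y\<in>W-{x}. v y) / real M))"
      by (rule exp_sum_ge[OF less.prems(1) Wne])
    have 3: "(\<Sum>x\<in>W. (\<Sum>y\<in>W-{x}. v y)) = real M * (\<Sum>x\<in>W. v x)"
    proof -
      have "(\<Sum>x\<in>W. (\<Sum>y\<in>W-{x}. v y)) = (\<Sum>x\<in>W. (\<Sum>y\<in>W. v y) - v x)"
        by (rule sum.cong[OF refl]) (simp add: sum_diff1 less.prems(1))
      also have "\<dots> = real N * (\<Sum>x\<in>W. v x) - (\<Sum>x\<in>W. v x)"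
        by (simp add: sum_subtractf less.prems)
      finally show ?thesis using M by (simp add: algebra_simps)
    qed
    have Mpos: "real M > 0" using M Nbig assms by simp
    have 4: "(\<Sum>x\<in>W. - lam * real a * (\<Sum>y\<in>W-{x}. v y) / real M) / real (card W)
        = - lam * real a * (\<Sum>x\<in>W. v x) / real N"
    proof -
      have "(\<Sum>x\<in>W. - lam * real a * (\<Sum>y\<in>W-{x}. v y) / real M) = (- lam * real a / real M) * (\<Sum>x\<in>W. (\<Sum>y\<in>W-{x}. v y))"
        by (simp add: sum_distrib_left sum_divide_distrib)
      also have "\<dots> = - lam * real a * (\<Sum>x\<in>W. v x)" using 3 Mpos by simp
      finally show ?thesis using less.prems by simp
    qed
    have "fact N * exp (- lam * real a * (\<Sum>x\<in>W. v x) / real N) =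
       fact M * (real (card W) * exp ((\<Sum>x\<in>W. - lam * real a * (\<Sum>y\<in>W-{x}. v y) / real M) / real (card W)))"
      using 4 M less.prems by simp
    also have "\<dots> \<le> fact M * (\<Sum>x\<in>W. exp (- lam * real a * (\<Sum>y\<in>W-{x}. v y) / real M))"
      using 2 by (simp add: mult_left_mono)
    also have "\<dots> = (\<Sum>x\<in>W. fact M * exp (- lam * real a * (\<Sum>y\<in>W-{x}. v y) / real M))"
      by (simp add: sum_distrib_left)
    finally show ?thesis using 1 by linarith
  qed
qed




lemma maximal_perm:
  fixes v :: "nat \<Rightarrow> real"
  assumes a1: "1 \<le> a" and lam: "0 \<le> lam"
  shows "finite W \<Longrightarrow> card W = N \<Longrightarrow>
    (\<Sum>ls\<in>permutations_of_set W. if badl v a thr ls then 1 else 0 :: real)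
     \<le> exp (lam * real a * thr) * (\<Sum>ls\<in>permutations_of_set W. exp (- lam * sumlast v a ls))"
proof (induction N arbitrary: W rule: less_induct)
  case (less N)
  have RHSnn: "0 \<le> exp (lam * real a * thr) * (\<Sum>ls\<in>permutations_of_set W. exp (- lam * sumlast v a ls))"
    by (simp add: sum_nonneg)
  show ?case
  proof (cases "N < a")
    case True
    have "\<And>ls. ls \<in> permutations_of_set W \<Longrightarrow> \<not> badl v a thr ls"
      using True less.prems by (intro badl_short) (simp add: length_finite_permutations_of_set)
    then have "(\<Sum>ls\<in>permutations_of_set W. if badl v a thr ls then 1 else 0 :: real) = 0" by simp
    then show ?thesis using RHSnn by simp
  next
    case False
    then have aN: "a \<le> N" by simp
    show ?thesis
    proof (cases "(\<Sum>x\<in>W. v x) < thr * real N")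
      case True
      have LHS: "(\<Sum>ls\<in>permutations_of_set W. if badl v a thr ls then 1 else 0 :: real) \<le> fact N"
      proof -
        have "(\<Sum>ls\<in>permutations_of_set W. if badl v a thr ls then 1 else 0 :: real) \<le> (\<Sum>ls\<in>permutations_of_set W. 1)"
          by (rule sum_mono) simp
        then show ?thesis using less.prems by simp
      qed
      have J: "fact N * exp (- lam * real a * (\<Sum>x\<in>W. v x) / real N)
        \<le> (\<Sum>ls\<in>permutations_of_set W. exp (- lam * sumlast v a ls))"
        by (rule jensen_perm[OF a1 less.prems aN])
      have Npos: "real N > 0" using aN a1 by simp
      have "(\<Sum>x\<in>W. v x) / real N < thr" using True Npos by (simp add: divide_less_eq)
      then have "lam * real a * ((\<Sum>x\<in>W. v x) / real N) \<le> lam * real a * thr"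
        using lam by (intro mult_left_mono) auto
      then have one: "1 \<le> exp (lam * real a * thr) * exp (- lam * real a * (\<Sum>x\<in>W. v x) / real N)"
        by (simp add: exp_add[symmetric])
      then have "fact N \<le> exp (lam * real a * thr) * (fact N * exp (- lam * real a * (\<Sum>x\<in>W. v x) / real N))"
      proof -
        have "fact N * 1 \<le> fact N * (exp (lam * real a * thr) * exp (- lam * real a * (\<Sum>x\<in>W. v x) / real N))"
          using one by (intro mult_left_mono) auto
        then show ?thesis by (simp add: ac_simps)
      qed
      also have "\<dots> \<le> exp (lam * real a * thr) * (\<Sum>ls\<in>permutations_of_set W. exp (- lam * sumlast v a ls))"
        using J by simp
      finally show ?thesis using LHS by linarith
    next
      case notstop: False
      have Wne: "W \<noteq> {}" using less.prems aN a1 by auto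
      obtain M where M: "N = Suc M" using aN a1 by (cases N) auto
      have cardx: "\<And>x. x \<in> W \<Longrightarrow> card (W - {x}) = M" using less.prems M by simp
      have headfalse: "\<And>x ls. x \<in> W \<Longrightarrow> ls \<in> permutations_of_set (W-{x}) \<Longrightarrow> badl v a thr (x#ls) = badl v a thr ls"
      proof -
        fix x ls assume x: "x \<in> W" and ls: "ls \<in> permutations_of_set (W-{x})"
        have "x # ls \<in> permutations_of_set W" using x ls by (auto simp: permutations_of_set_def)
        then have "sum_list (map v (x#ls)) = (\<Sum>x\<in>W. v x)" by (rule perm_sum_list)
        moreover have "Suc (length ls) = N" using ls cardx[OF x] M by (simp add: length_finite_permutations_of_set)
        ultimately show "badl v a thr (x#ls) = badl v a thr ls" using notstop by auto
      qed
      show ?thesis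
      proof (cases "N = a")
        case True
        have "\<And>ls. ls \<in> permutations_of_set W \<Longrightarrow> \<not> badl v a thr ls"
        proof -
          fix ls assume ls: "ls \<in> permutations_of_set W"
          then obtain x ls' where "ls = x # ls'" "x \<in> W" "ls' \<in> permutations_of_set (W-{x})"
            using permutations_of_set_nonempty[OF Wne] by auto
          moreover have "length ls' < a" using calculation True M cardx by (simp add: length_finite_permutations_of_set)
          ultimately show "\<not> badl v a thr ls" using headfalse[of x ls'] badl_short[of ls' a v thr] by simp
        qed
        then have "(\<Sum>ls\<in>permutations_of_set W. if badl v a thr ls then 1 else 0 :: real) = 0" by simp
        then show ?thesis using RHSnn by simp
      next
        case False
        then have Nbig: "a < N" using aN by simp
        have "(\<Sum>ls\<in>permutations_of_set W. if badl v a thr ls then 1 else 0 :: real)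
          = (\<Sum>x\<in>W. \<Sum>ls\<in>permutations_of_set (W-{x}). if badl v a thr (x#ls) then 1 else 0)"
          by (rule sum_perms_cons[OF less.prems(1) Wne])
        also have "\<dots> = (\<Sum>x\<in>W. \<Sum>ls\<in>permutations_of_set (W-{x}). if badl v a thr ls then 1 else 0)"
          by (intro sum.cong refl) (use headfalse in presburger)
        also have "\<dots> \<le> (\<Sum>x\<in>W. exp (lam * real a * thr) * (\<Sum>ls\<in>permutations_of_set (W-{x}). exp (- lam * sumlast v a ls)))"
          apply (rule sum_mono)
          using less.IH[of M] M cardx less.prems(1) by auto
        also have "\<dots> = exp (lam * real a * thr) * (\<Sum>x\<in>W. \<Sum>ls\<in>permutations_of_set (W-{x}). exp (- lam * sumlast v a (x#ls)))"
          apply (simp add: sum_distrib_left)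
          apply (intro sum.cong refl)
          using cardx M Nbig by (subst sumlast_cons) (auto simp: length_finite_permutations_of_set)
        also have "\<dots> = exp (lam * real a * thr) * (\<Sum>ls\<in>permutations_of_set W. exp (- lam * sumlast v a ls))"
          by (simp add: sum_perms_cons[OF less.prems(1) Wne])
        finally show ?thesis .
      qed
    qed
  qed
qed



lemma exp_neg_le_quad:
  assumes "0 \<le> (z::real)" shows "exp (-z) \<le> 1 - z + z^2/2"
proof -
  define g where "g = (\<lambda>z::real. 1 - z + z^2/2 - exp (-z))"
  have "g 0 \<le> g z"
  proof (rule DERIV_nonneg_imp_nondecreasing[OF assms])
    fix x :: real assume "0 \<le> x" "x \<le> z"
    have "(g has_real_derivative (-1 + x + exp (-x))) (at x)"
      unfolding g_def by (auto intro!: derivative_eq_intros simp: power2_eq_square)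
    moreover have "0 \<le> -1 + x + exp (-x)" using exp_ge_add_one_self[of "-x"] by simp
    ultimately show "\<exists>y. (g has_real_derivative y) (at x) \<and> 0 \<le> y" by blast
  qed
  then show ?thesis by (simp add: g_def)
qed

lemma forward_perm:
  fixes v :: "nat \<Rightarrow> real" and c lam :: real
  assumes lam: "0 \<le> lam" "lam * c \<le> 1" and vb: "\<And>x. 0 \<le> v x" "\<And>x. v x \<le> c"
  shows "finite W \<Longrightarrow> r \<le> card W \<Longrightarrow>
    (\<Sum>ls\<in>permutations_of_set W. exp (- lam * sum_list (map v (take r ls))))
      \<le> fact (card W) * exp (- real r * (lam * (1 - lam * c / 2)) * (\<Sum>x\<in>W. v x) / real (card W))"
proof (induction r arbitrary: W)
  case 0
  then show ?case by simp
next
  case (Suc r)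
  define kap where "kap = lam * (1 - lam * c / 2)"
  define N where "N = card W"
  define S where "S = (\<Sum>x\<in>W. v x)"
  have c0: "0 \<le> c" using vb[of 0] by linarith
  have Wne: "W \<noteq> {}" using Suc.prems by auto
  obtain M where M: "N = Suc M" using Suc.prems unfolding N_def by (cases "card W") auto
  have rM: "r \<le> M" using Suc.prems M N_def by simp
  have cardx: "\<And>x. x \<in> W \<Longrightarrow> card (W - {x}) = M" using Suc.prems M N_def by simp
  have S0: "0 \<le> S" unfolding S_def by (rule sum_nonneg) (use vb in auto)
  have kap0: "0 \<le> kap" unfolding kap_def using lam by (intro mult_nonneg_nonneg) auto
  have kaplam: "kap \<le> lam" unfolding kap_def using lam c0 by (simp add: algebra_simps)
  define y where "y = real r * kap / real M"
  have yM: "y * real M = real r * kap" unfolding y_def using rM by (cases "M = 0") auto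
  have y0: "0 \<le> y" unfolding y_def using kap0 by simp
  have ylam: "y \<le> lam"
  proof (cases "M = 0")
    case True then show ?thesis unfolding y_def using lam by simp
  next
    case False
    then have "real r / real M \<le> 1" using rM by simp
    then have "real r / real M * kap \<le> 1 * kap" using kap0 by (intro mult_right_mono) auto
    then show ?thesis unfolding y_def using kaplam by simp
  qed
  define d where "d = lam - y"
  define rho where "rho = d * (1 - lam * c / 2)"
  have d0: "0 \<le> d" "d \<le> lam" unfolding d_def using ylam y0 by auto
  have IH: "\<And>x. x \<in> W \<Longrightarrow> (\<Sum>ls\<in>permutations_of_set (W-{x}). exp (- lam * sum_list (map v (take r ls))))
      \<le> fact M * exp (- real r * kap * (S - v x) / real M)"
  proof -
    fix x assume x: "x \<in> W"
    have "sum v (W - {x}) = S - v x" unfolding S_def using x Suc.prems(1) by (simp add: sum_diff1)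
    moreover have "finite (W - {x})" "r \<le> card (W - {x})" using Suc.prems(1) cardx[OF x] rM by auto
    ultimately show "?thesis x" using Suc.IH[of "W - {x}"] cardx[OF x] unfolding kap_def by simp
  qed
  have pt: "\<And>x. exp (- d * v x) \<le> 1 - rho * v x"
  proof -
    fix x
    have "exp (- (d * v x)) \<le> 1 - d * v x + (d * v x)^2/2"
      by (rule exp_neg_le_quad) (use d0 vb in simp)
    also have "(d * v x)^2/2 \<le> d * d * c * v x / 2"
    proof -
      have "v x * v x \<le> c * v x" using vb[of x] by (intro mult_right_mono) auto
      then have "d * d * (v x * v x) \<le> d * d * (c * v x)" by (intro mult_left_mono) auto
      then show ?thesis by (simp add: power2_eq_square algebra_simps)
    qed
    also have "d * d * c * v x / 2 \<le> d * lam * c * v x / 2"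
    proof -
      have "d * d \<le> d * lam" using d0 by (intro mult_left_mono) auto
      then have "d * d * (c * v x) \<le> d * lam * (c * v x)" using c0 vb by (intro mult_right_mono) auto
      then show ?thesis by (simp add: algebra_simps)
    qed
    finally show "exp (- d * v x) \<le> 1 - rho * v x" unfolding rho_def by (simp add: algebra_simps)
  qed
  have "(\<Sum>ls\<in>permutations_of_set W. exp (- lam * sum_list (map v (take (Suc r) ls))))
     = (\<Sum>x\<in>W. \<Sum>ls\<in>permutations_of_set (W-{x}). exp (- lam * sum_list (map v (take (Suc r) (x#ls)))))"
    by (rule sum_perms_cons[OF Suc.prems(1) Wne])
  also have "\<dots> = (\<Sum>x\<in>W. exp (- lam * v x) * (\<Sum>ls\<in>permutations_of_set (W-{x}). exp (- lam * sum_list (map v (take r ls)))))"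
    by (simp add: sum_distrib_left algebra_simps exp_add[symmetric])
  also have "\<dots> \<le> (\<Sum>x\<in>W. exp (- lam * v x) * (fact M * exp (- real r * kap * (S - v x) / real M)))"
    by (intro sum_mono mult_left_mono IH) auto
  also have "\<dots> = (\<Sum>x\<in>W. fact M * exp (- y * S) * exp (- d * v x))"
  proof (intro sum.cong refl)
    fix x
    have "- lam * v x + - real r * kap * (S - v x) / real M = - y * S + - d * v x"
      unfolding d_def y_def by (simp add: algebra_simps diff_divide_distrib)
    then show "exp (- lam * v x) * (fact M * exp (- real r * kap * (S - v x) / real M)) = fact M * exp (- y * S) * exp (- d * v x)"
      by (simp add: exp_add[symmetric] algebra_simps)
  qed
  also have "\<dots> = fact M * exp (- y * S) * (\<Sum>x\<in>W. exp (- d * v x))"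
    by (simp add: sum_distrib_left)
  also have "\<dots> \<le> fact M * exp (- y * S) * (\<Sum>x\<in>W. 1 - rho * v x)"
    by (intro mult_left_mono sum_mono pt) auto
  also have "(\<Sum>x\<in>W. 1 - rho * v x) = real N - rho * S"
    unfolding S_def N_def by (simp add: sum_subtractf sum_distrib_left)
  also have "real N - rho * S \<le> real N * exp (- rho * S / real N)"
  proof -
    have "1 + (- rho * S / real N) \<le> exp (- rho * S / real N)" by (rule exp_ge_add_one_self)
    then have "real N * (1 + (- rho * S / real N)) \<le> real N * exp (- rho * S / real N)"
      by (intro mult_left_mono) auto
    moreover have "real N * (1 + (- rho * S / real N)) = real N - rho * S" using M by (simp add: field_simps)
    ultimately show ?thesis by simp
  qed
  finally have A: "(\<Sum>ls\<in>permutations_of_set W. exp (- lam * sum_list (map v (take (Suc r) ls))))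
     \<le> fact M * exp (- y * S) * (real N * exp (- rho * S / real N))"
    by (simp add: mult_left_mono)
  have B: "fact M * exp (- y * S) * (real N * exp (- rho * S / real N)) = fact N * exp (- (y + rho / real N) * S)"
    using M by (simp add: exp_add[symmetric] algebra_simps)
  have C: "real (Suc r) * kap / real N \<le> y + rho / real N"
  proof -
    have Npos: "real N > 0" using M by simp
    have rhoeq: "rho = kap - y * (1 - lam * c / 2)" unfolding rho_def d_def kap_def by (simp add: field_simps)
    have "real (Suc r) * kap \<le> y * real N + rho"
    proof -
      have "y * real N + rho = y * real M + y + kap - y * (1 - lam * c / 2)"
        using rhoeq M by (simp add: algebra_simps)
      also have "\<dots> = real r * kap + kap + y * (lam * c / 2)" using yM by (simp add: algebra_simps)
      finally show ?thesis using y0 lam c0 by (simp add: algebra_simps)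
    qed
    then have "real (Suc r) * kap / real N \<le> (y * real N + rho) / real N"
      using Npos by (intro divide_right_mono) auto
    also have "(y * real N + rho) / real N = y + rho / real N" using Npos by (simp add: field_simps)
    finally show ?thesis .
  qed
  have "exp (- (y + rho / real N) * S) \<le> exp (- real (Suc r) * kap * S / real N)"
  proof -
    have "real (Suc r) * kap / real N * S \<le> (y + rho / real N) * S" using mult_right_mono[OF C S0] .
    moreover have "- real (Suc r) * kap * S / real N = - (real (Suc r) * kap * S / real N)" by (simp only: mult_minus_left minus_divide_left)
    moreover have "real (Suc r) * kap / real N * S = real (Suc r) * kap * S / real N" by simp
    moreover have "- (y + rho / real N) * S = - ((y + rho / real N) * S)" by (simp only: mult_minus_left)
    ultimately have "- (y + rho / real N) * S \<le> - real (Suc r) * kap * S / real N" by linarith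
    then show ?thesis by simp
  qed
  then have "fact N * exp (- (y + rho / real N) * S) \<le> fact N * exp (- real (Suc r) * kap * S / real N)"
    by (intro mult_left_mono) auto
  with A B show ?case unfolding kap_def S_def N_def by linarith
qed




lemma sumlast_take:
  assumes "a \<le> card W" "finite W"
  shows "(\<Sum>ls\<in>permutations_of_set W. exp (- lam * sumlast v a ls))
       = (\<Sum>ls\<in>permutations_of_set W. exp (- lam * sum_list (map v (take a ls))))"
proof -
  have "(\<Sum>ls\<in>permutations_of_set W. exp (- lam * sum_list (map v (take a ls))))
      = (\<Sum>ls\<in>rev ` permutations_of_set W. exp (- lam * sum_list (map v (take a ls))))" by simp
  also have "\<dots> = (\<Sum>ls\<in>permutations_of_set W. exp (- lam * sum_list (map v (take a (rev ls)))))"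
    by (subst sum.reindex) (auto simp: inj_on_def)
  also have "\<dots> = (\<Sum>ls\<in>permutations_of_set W. exp (- lam * sumlast v a ls))"
    by (intro sum.cong refl) (simp add: take_rev sumlast_def rev_map[symmetric])
  finally show ?thesis ..
qed

lemma bucket_bound:
  fixes v :: "nat \<Rightarrow> real" and c \<delta> Ptot :: real and n a :: nat
  assumes vb: "\<And>x. 0 \<le> v x" "\<And>x. v x \<le> c" and c0: "0 < c"
    and Ps: "(\<Sum>x\<in>{1..n}. v x) = Ptot" and n0: "0 < n" and Ppos: "0 < Ptot"
    and a1: "1 \<le> a" and d0: "0 \<le> \<delta>" "\<delta> \<le> Ptot / real n"
  shows "(\<Sum>ls\<in>permutations_of_set {1..n}. if badl v a (Ptot / real n - \<delta>) ls then 1 else 0 :: real)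
      \<le> fact n * exp (- real a * \<delta>^2 / (2 * c * (Ptot / real n)))"
proof (cases "a \<le> n")
  case False
  have "\<And>ls. ls \<in> permutations_of_set {1..n} \<Longrightarrow> \<not> badl v a (Ptot / real n - \<delta>) ls"
    using False by (intro badl_short) (simp add: length_finite_permutations_of_set)
  then show ?thesis by simp
next
  case True
  define \<mu> where "\<mu> = Ptot / real n"
  have mu0: "0 < \<mu>" unfolding \<mu>_def using Ppos n0 by simp
  define lam where "lam = \<delta> / (c * \<mu>)"
  have lam0: "0 \<le> lam" unfolding lam_def using d0 c0 mu0 by simp
  have lamc: "lam * c \<le> 1" unfolding lam_def using d0 c0 mu0 by (simp add: \<mu>_def[symmetric] field_simps)
  have M: "(\<Sum>ls\<in>permutations_of_set {1..n}. if badl v a (\<mu> - \<delta>) ls then 1 else 0 :: real)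
     \<le> exp (lam * real a * (\<mu> - \<delta>)) * (\<Sum>ls\<in>permutations_of_set {1..n}. exp (- lam * sumlast v a ls))"
    by (rule maximal_perm[OF a1 lam0]) auto
  also have "(\<Sum>ls\<in>permutations_of_set {1..n}. exp (- lam * sumlast v a ls))
      = (\<Sum>ls\<in>permutations_of_set {1..n}. exp (- lam * sum_list (map v (take a ls))))"
    by (rule sumlast_take) (use True in auto)
  also have "\<dots> \<le> fact n * exp (- real a * (lam * (1 - lam * c / 2)) * Ptot / real n)"
    using forward_perm[of lam c v "{1..n}" a, OF lam0 lamc vb] True Ps by simp
  finally have 1: "(\<Sum>ls\<in>permutations_of_set {1..n}. if badl v a (\<mu> - \<delta>) ls then 1 else 0 :: real)
     \<le> exp (lam * real a * (\<mu> - \<delta>)) * (fact n * exp (- real a * (lam * (1 - lam * c / 2)) * Ptot / real n))"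
    by (simp add: mult_left_mono)
  have 2: "lam * real a * (\<mu> - \<delta>) + - real a * (lam * (1 - lam * c / 2)) * Ptot / real n
      = - real a * \<delta>^2 / (2 * c * \<mu>)"
  proof -
    have e: "- real a * (lam * (1 - lam * c / 2)) * Ptot / real n = - real a * (lam * (1 - lam * c / 2)) * \<mu>"
      unfolding \<mu>_def by simp
    have "lam * real a * (\<mu> - \<delta>) + - real a * (lam * (1 - lam * c / 2)) * \<mu> = - real a * \<delta>^2 / (2 * c * \<mu>)"
      unfolding lam_def using c0 mu0 by (simp add: field_simps power2_eq_square)
    then show ?thesis using e by simp
  qed
  have X: "exp (lam * real a * (\<mu> - \<delta>)) * (fact n * exp (- real a * (lam * (1 - lam * c / 2)) * Ptot / real n))
     = fact n * exp (- real a * \<delta>^2 / (2 * c * \<mu>))"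
    using 2 by (simp add: exp_add[symmetric] ac_simps)
  have "(\<Sum>ls\<in>permutations_of_set {1..n}. if badl v a (\<mu> - \<delta>) ls then 1 else 0 :: real)
      \<le> fact n * exp (- real a * \<delta>^2 / (2 * c * \<mu>))"
    using 1 X by (rule ord_le_eq_trans)
  then show ?thesis unfolding \<mu>_def .
qed




lemma badl_drop:
  "j < length ls \<Longrightarrow> a \<le> length ls - j \<Longrightarrow> sum_list (map v (drop j ls)) < thr * real (length ls - j) \<Longrightarrow> badl v a thr ls"
proof (induction ls arbitrary: j)
  case Nil then show ?case by simp
next
  case (Cons x xs)
  show ?case
  proof (cases j)
    case 0 then show ?thesis using Cons.prems by simp
  next
    case (Suc j')
    then have "badl v a thr xs" using Cons.prems by (intro Cons.IH) auto
    then show ?thesis by simp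
  qed
qed

lemma ereal_sum_minfty:
  fixes g :: "'a \<Rightarrow> ereal"
  assumes "finite A" "\<forall>i\<in>A. g i \<noteq> \<infinity>" "i \<in> A" "g i = -\<infinity>"
  shows "sum g A = -\<infinity>"
proof -
  have "sum g A = g i + sum g (A - {i})" using assms by (simp add: sum.remove)
  moreover have "sum g (A - {i}) \<noteq> \<infinity>" using assms by (simp add: sum_Pinfty)
  ultimately show ?thesis using assms by simp
qed

lemma kappa_facts:
  fixes n L N0 t :: nat and \<epsilon> :: real
  assumes n0: "0 < n" and eps: "0 < \<epsilon>" "\<epsilon> < 1" and Ld: "real L = log 2 (1 / \<epsilon>)"
    and N0: "real N0 = real n * \<epsilon>" and t: "t \<in> {1..n}" "real t \<le> real n * (1 - \<epsilon>)"
  shows "1 \<le> kappa n \<epsilon> t" "kappa n \<epsilon> t \<le> int L"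
    "2^(nat (kappa n \<epsilon> t) - 1) * N0 + 1 \<le> n - t + 1"
proof -
  define q where "q = (real n - real t) / (real n * \<epsilon>)"
  have ne: "0 < real n * \<epsilon>" using n0 eps by simp
  have q1: "1 \<le> q" unfolding q_def using t ne by (simp add: field_simps)
  have ql: "q < 1 / \<epsilon>"
  proof -
    have "real n - real t < real n" using t by simp
    then have "q < real n / (real n * \<epsilon>)" unfolding q_def using ne by (intro divide_strict_right_mono) auto
    also have "\<dots> = 1 / \<epsilon>" using n0 by simp
    finally show ?thesis .
  qed
  have lq0: "0 \<le> log 2 q" using q1 by simp
  have lqL: "log 2 q < real L" unfolding Ld using q1 ql by (intro log_less) auto
  define fl where "fl = \<lfloor>log 2 q\<rfloor>"
  have kap: "kappa n \<epsilon> t = fl + 1" unfolding kappa_def fl_def q_def by simp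
  have fl0: "0 \<le> fl" unfolding fl_def using lq0 by simp
  have flL: "fl < int L" unfolding fl_def using lqL by (simp add: floor_less_iff)
  show "1 \<le> kappa n \<epsilon> t" "kappa n \<epsilon> t \<le> int L" using kap fl0 flL by auto
  have "real_of_int fl \<le> log 2 q" unfolding fl_def by simp
  then have "2 powr real_of_int fl \<le> 2 powr (log 2 q)" by simp
  also have "\<dots> = q" using q1 by simp
  finally have "2 powr real_of_int fl \<le> q" .
  moreover have "2 powr real_of_int fl = 2 ^ nat fl" using fl0 by (simp add: powr_realpow[symmetric])
  ultimately have "2 ^ nat fl \<le> q" by simp
  then have "2 ^ nat fl * (real n * \<epsilon>) \<le> real n - real t" unfolding q_def using ne by (simp add: field_simps)
  then have "real (2 ^ nat fl * N0) \<le> real (n - t)" using N0 t by simp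
  then have "2 ^ nat fl * N0 \<le> n - t" by linarith
  moreover have "nat (kappa n \<epsilon> t) - 1 = nat fl" using kap fl0 by simp
  ultimately show "2^(nat (kappa n \<epsilon> t) - 1) * N0 + 1 \<le> n - t + 1" by simp
qed

lemma card_filter_sum:
  "finite A \<Longrightarrow> real (card {x\<in>A. P x}) = (\<Sum>x\<in>A. if P x then 1 else 0 :: real)"
  by (simp add: sum.If_cases Int_def)

lemma map_perm_inj:
  "inj_on (\<lambda>\<sigma>. map \<sigma> [1..<n+1]) {\<sigma>. \<sigma> permutes {1..n}}"
proof (rule inj_onI)
  fix \<sigma> \<tau> assume s: "\<sigma> \<in> {\<sigma>. \<sigma> permutes {1..n}}" and t: "\<tau> \<in> {\<sigma>. \<sigma> permutes {1..n}}"
    and eq: "map \<sigma> [1..<n+1] = map \<tau> [1..<n+1]"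
  show "\<sigma> = \<tau>"
  proof
    fix x show "\<sigma> x = \<tau> x"
    proof (cases "x \<in> {1..n}")
      case True
      then have xin: "x \<in> set [1..<n+1]" by auto
      have "\<forall>y\<in>set [1..<n+1]. \<sigma> y = \<tau> y" using eq by (simp only: map_eq_conv)
      then show ?thesis using xin by blast
    next
      case False
      then show ?thesis using s t by (simp add: permutes_not_in)
    qed
  qed
qed

lemma map_perm_in:
  "\<sigma> permutes {1..n} \<Longrightarrow> map \<sigma> [1..<n+1] \<in> permutations_of_set {1..n}"
proof (rule permutations_of_setI)
  assume s: "\<sigma> permutes {1..n}"
  have "set [1..<n+1] = {1..n}" by auto
  then show "set (map \<sigma> [1..<n+1]) = {1..n}" using permutes_image[OF s] by simp
  show "distinct (map \<sigma> [1..<n+1])" using permutes_inj[OF s]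
    by (simp add: distinct_map inj_on_subset)
qed




theorem mainTheorem7:
  fixes n L :: nat
    and b :: "real^'m"
    and f :: "nat \<Rightarrow> real^'k \<Rightarrow> ereal"
    and A :: "nat \<Rightarrow> real^'k^'m"
    and P \<gamma> \<epsilon> :: real
    and xs :: "nat \<Rightarrow> real^'k"
    and y :: "real^'m"
  assumes n_pos: "0 < n"
    and b_pos: "\<forall>i. 0 < b $ i"
    and f_G: "\<forall>t\<in>{1..n}. classG (f t)"
    and A_nonneg: "\<forall>t\<in>{1..n}. \<forall>i j. 0 \<le> A t $ i $ j"
    and P_def: "Pstar n f A b = ereal P"
    and P_pos: "0 < P"
    and gamma_pos: "0 < \<gamma>"
    and gamma_A: "\<forall>t\<in>{1..n}. \<forall>x. 0 \<le> f t x \<longrightarrow> (\<forall>i. (A t *v x) $ i / b $ i \<le> \<gamma>)"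
    and gamma_f: "\<forall>t\<in>{1..n}. \<forall>x\<in>edom (f t). f t x \<le> ereal (\<gamma> * P)"
    and eps: "0 < \<epsilon>" "\<epsilon> < 1"
    and L_def: "real L = log 2 (1 / \<epsilon>)"
    and n_eps_int: "real n * \<epsilon> \<in> \<int>"
    and xs_feas: "feasible n A b xs"
    and xs_opt: "(\<Sum>t\<in>{1..n}. f t (xs t)) = Pstar n f A b"
    and y_nonneg: "\<forall>i. 0 \<le> y $ i"
    and compl_slack: "\<forall>i. (\<Sum>t\<in>{1..n}. A t *v xs t) $ i < b $ i \<longrightarrow> y $ i = 0"
    and supergrad: "\<forall>t\<in>{1..n}. \<forall>z. f t z \<le> f t (xs t) + ereal ((transpose (A t) *v y) \<bullet> (z - xs t))"
  shows "measure_pmf.prob (pmf_of_set {\<sigma>. \<sigma> permutes {1..n}})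
           {\<sigma>. \<exists>t\<in>{1..n}. real t \<le> real n * (1 - \<epsilon>) \<and>
                 S_stat n f xs P \<sigma> t < - (P / real n) * 2 powr (- real_of_int (kappa n \<epsilon> t) / 2) * sqrt \<epsilon>}
         \<le> real L * exp (- (\<epsilon> ^ 2) / (4 * \<gamma>))"
proof -
  define v where "v = (\<lambda>t. if t \<in> {1..n} then real_of_ereal (f t (xs t)) else 0)"
  have notinf: "\<forall>t\<in>{1..n}. \<forall>x. f t x \<noteq> \<infinity>"
    using f_G by (auto simp: classG_def proper_concave_fn_def)
  have sumf: "(\<Sum>t\<in>{1..n}. f t (xs t)) = ereal P" using xs_opt P_def by simp
  have notminf: "\<forall>t\<in>{1..n}. f t (xs t) \<noteq> -\<infinity>"
  proof (intro ballI notI)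
    fix t assume "t \<in> {1..n}" "f t (xs t) = -\<infinity>"
    then have "(\<Sum>t\<in>{1..n}. f t (xs t)) = -\<infinity>"
      using notinf by (intro ereal_sum_minfty) auto
    with sumf show False by simp
  qed
  have fin: "\<And>t. t \<in> {1..n} \<Longrightarrow> f t (xs t) = ereal (v t)"
  proof -
    fix t assume t: "t \<in> {1..n}"
    then have "\<bar>f t (xs t)\<bar> \<noteq> \<infinity>" using notinf notminf by auto
    then show "f t (xs t) = ereal (v t)" using t by (simp add: v_def ereal_real)
  qed
  have sumv: "(\<Sum>t\<in>{1..n}. v t) = P"
  proof -
    have "(\<Sum>t\<in>{1..n}. f t (xs t)) = (\<Sum>t\<in>{1..n}. ereal (v t))" using fin by (intro sum.cong) auto
    then show ?thesis using sumf by simp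
  qed
  have vle: "\<And>t. v t \<le> \<gamma> * P"
  proof -
    fix t show "v t \<le> \<gamma> * P"
    proof (cases "t \<in> {1..n}")
      case True
      then have "xs t \<in> edom (f t)" using notminf by (simp add: edom_def)
      then have "f t (xs t) \<le> ereal (\<gamma> * P)" using gamma_f True by auto
      then show ?thesis using fin[OF True] by simp
    next
      case False then show ?thesis using gamma_pos P_pos by (auto simp: v_def)
    qed
  qed
  have vnn: "\<And>t. 0 \<le> v t"
  proof -
    fix t0 show "0 \<le> v t0"
    proof (rule ccontr)
      assume neg: "\<not> 0 \<le> v t0"
      then have t0: "t0 \<in> {1..n}" by (auto simp: v_def split: if_splits)
      define x' where "x' = xs(t0 := 0)"
      have feas: "feasible n A b x'"
        unfolding feasible_def
      proof
        fix i
        have "(\<Sum>t\<in>{1..n}. A t *v x' t) = (\<Sum>t\<in>{1..n}. A t *v xs t) - A t0 *v xs t0"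
        proof -
          have "(\<Sum>t\<in>{1..n}. A t *v xs t) = A t0 *v xs t0 + (\<Sum>t\<in>{1..n}-{t0}. A t *v xs t)"
            using t0 by (simp add: sum.remove)
          moreover have "(\<Sum>t\<in>{1..n}. A t *v x' t) = A t0 *v x' t0 + (\<Sum>t\<in>{1..n}-{t0}. A t *v x' t)"
            using t0 by (simp add: sum.remove)
          moreover have "(\<Sum>t\<in>{1..n}-{t0}. A t *v x' t) = (\<Sum>t\<in>{1..n}-{t0}. A t *v xs t)"
            by (intro sum.cong) (auto simp: x'_def)
          moreover have "A t0 *v x' t0 = 0" by (simp add: x'_def)
          ultimately show ?thesis by simp
        qed
        moreover have "0 \<le> (A t0 *v xs t0) $ i"
        proof -
          have "xs t0 \<in> edom (f t0)" using notminf t0 by (simp add: edom_def)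
          moreover have "edom (f t0) \<subseteq> {x. \<forall>i. 0 \<le> x $ i}" using f_G t0 by (simp add: classG_def)
          ultimately have "\<forall>j. 0 \<le> xs t0 $ j" by blast
          then show ?thesis using A_nonneg t0 by (simp add: matrix_vector_mult_def sum_nonneg)
        qed
        moreover have "(\<Sum>t\<in>{1..n}. A t *v xs t) $ i \<le> b $ i" using xs_feas by (simp add: feasible_def)
        ultimately show "(\<Sum>t\<in>{1..n}. A t *v x' t) $ i \<le> b $ i" by simp
      qed
      have "(\<Sum>t\<in>{1..n}. f t (x' t)) \<le> Pstar n f A b"
        unfolding Pstar_def by (rule SUP_upper) (use feas in simp)
      moreover have "(\<Sum>t\<in>{1..n}. f t (x' t)) = ereal (P - v t0)"
      proof -
        have "(\<Sum>t\<in>{1..n}. f t (x' t)) = (\<Sum>t\<in>{1..n}. ereal (if t = t0 then 0 else v t))"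
          using fin f_G t0 by (intro sum.cong) (auto simp: x'_def classG_def)
        also have "\<dots> = ereal (\<Sum>t\<in>{1..n}. (if t = t0 then 0 else v t))" by simp
        also have "(\<Sum>t\<in>{1..n}. (if t = t0 then 0 else v t)) = P - v t0"
        proof -
          have "(\<Sum>t\<in>{1..n}. (if t = t0 then 0 else v t)) = 0 + (\<Sum>t\<in>{1..n}-{t0}. (if t = t0 then 0 else v t))"
            using t0 by (simp add: sum.remove)
          also have "(\<Sum>t\<in>{1..n}-{t0}. (if t = t0 then 0 else v t)) = (\<Sum>t\<in>{1..n}-{t0}. v t)"
            by (intro sum.cong) auto
          also have "\<dots> = P - v t0" using sumv t0 by (simp add: sum_diff1)
          finally show ?thesis by simp
        qed
        finally show ?thesis .
      qed
      ultimately have "P - v t0 \<le> P" using P_def by simp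
      with neg show False by simp
    qed
  qed
  obtain z where z: "real n * \<epsilon> = of_int z" using n_eps_int by (auto elim: Ints_cases)
  define N0 where "N0 = nat z"
  have N0: "real N0 = real n * \<epsilon>"
  proof -
    have "0 \<le> real n * \<epsilon>" using eps by simp
    then have "0 \<le> z" using z by simp
    then show ?thesis using z by (simp add: N0_def)
  qed
  define a where "a = (\<lambda>k::nat. 2^(k-1) * N0 + 1)"
  define \<delta> where "\<delta> = (\<lambda>k::nat. P / real n * 2 powr (- real k / 2) * sqrt \<epsilon>)"
  have bucket: "\<And>k. k \<in> {1..L} \<Longrightarrow>
      (\<Sum>ls\<in>permutations_of_set {1..n}. if badl v (a k) (P / real n - \<delta> k) ls then 1 else 0 :: real)
       \<le> fact n * exp (- (\<epsilon> ^ 2) / (4 * \<gamma>))"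
  proof -
    fix k assume k: "k \<in> {1..L}"
    have k1: "1 \<le> k" using k by simp
    define w where "w = 2 powr (- real k / 2)"
    have w0: "0 < w" by (simp add: w_def)
    have "2 powr (- real k / 2) \<le> 2 powr 0" by (rule powr_mono) auto
    then have w1: "w \<le> 1" by (simp add: w_def)
    have ww: "w ^ 2 = 2 powr (- real k)"
      unfolding w_def power2_eq_square by (simp add: powr_add[symmetric])
    have pk: "2 powr (- real k) * 2 ^ (k - 1) = 1 / 2"
    proof -
      have "(2::real) ^ (k - 1) = 2 powr (real k - 1)" using k1 by (simp add: powr_realpow[symmetric] of_nat_diff)
      moreover have "(2::real) powr (- real k) * 2 powr (real k - 1) = 2 powr (- real k + (real k - 1))"
        by (rule powr_add[symmetric])
      ultimately have "2 powr (- real k) * 2 ^ (k - 1) = 2 powr (- real k + (real k - 1))" by simp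
      also have "\<dots> = 1 / 2" by (simp add: powr_minus_divide)
      finally show ?thesis .
    qed
    have se0: "0 \<le> sqrt \<epsilon>" "sqrt \<epsilon> \<le> 1" using eps by auto
    have se2: "sqrt \<epsilon> ^ 2 = \<epsilon>" using eps by simp
    have dk: "\<delta> k = P / real n * w * sqrt \<epsilon>" by (simp add: \<delta>_def w_def)
    have Pn: "0 < P / real n" using P_pos n_pos by simp
    have d0: "0 \<le> \<delta> k" unfolding dk using Pn w0 se0 by (intro mult_nonneg_nonneg) auto
    have dle: "\<delta> k \<le> P / real n"
    proof -
      have "w * sqrt \<epsilon> \<le> 1 * 1" using w0 w1 se0 by (intro mult_mono) auto
      then have "P / real n * (w * sqrt \<epsilon>) \<le> P / real n * 1" using Pn by (intro mult_left_mono) auto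
      then show ?thesis unfolding dk by (simp add: mult.assoc)
    qed
    have a1: "1 \<le> a k" by (simp add: a_def)
    have BB: "(\<Sum>ls\<in>permutations_of_set {1..n}. if badl v (a k) (P / real n - \<delta> k) ls then 1 else 0 :: real)
      \<le> fact n * exp (- real (a k) * (\<delta> k)^2 / (2 * (\<gamma> * P) * (P / real n)))"
      by (rule bucket_bound[where v=v and c="\<gamma> * P" and Ptot=P and n=n and a="a k" and \<delta>="\<delta> k"])
         (use vnn vle gamma_pos P_pos sumv n_pos a1 d0 dle in auto)
    have X: "real (a k) * (\<delta> k)^2 / (2 * (\<gamma> * P) * (P / real n))
       = (real (a k) * 2 powr (- real k)) * \<epsilon> / (2 * \<gamma> * real n)"
    proof -
      have "(\<delta> k)^2 = (P / real n)^2 * w^2 * sqrt \<epsilon> ^ 2" unfolding dk by (simp only: power_mult_distrib)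
      also have "\<dots> = (P / real n)^2 * 2 powr (- real k) * \<epsilon>" using ww se2 by simp
      finally have "(\<delta> k)^2 = (P / real n)^2 * 2 powr (- real k) * \<epsilon>" .
      then show ?thesis using P_pos n_pos gamma_pos by (simp add: field_simps power2_eq_square)
    qed
    have ak: "real n * \<epsilon> / 2 \<le> real (a k) * 2 powr (- real k)"
    proof -
      have "real (a k) \<ge> 2 ^ (k - 1) * (real n * \<epsilon>)" by (simp add: a_def N0)
      then have "real (a k) * 2 powr (- real k) \<ge> 2 ^ (k - 1) * (real n * \<epsilon>) * 2 powr (- real k)"
        by (intro mult_right_mono) auto
      also have "2 ^ (k - 1) * (real n * \<epsilon>) * 2 powr (- real k) = (2 powr (- real k) * 2 ^ (k - 1)) * (real n * \<epsilon>)"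
        by (simp add: ac_simps)
      also have "\<dots> = real n * \<epsilon> / 2" using pk by simp
      finally show ?thesis .
    qed
    have "\<epsilon> ^ 2 / (4 * \<gamma>) = (real n * \<epsilon> / 2) * \<epsilon> / (2 * \<gamma> * real n)"
      using n_pos gamma_pos by (simp add: field_simps power2_eq_square)
    also have "\<dots> \<le> (real (a k) * 2 powr (- real k)) * \<epsilon> / (2 * \<gamma> * real n)"
      using ak eps gamma_pos n_pos by (intro divide_right_mono mult_right_mono) auto
    finally have "\<epsilon> ^ 2 / (4 * \<gamma>) \<le> real (a k) * (\<delta> k)^2 / (2 * (\<gamma> * P) * (P / real n))"
      using X by simp
    then have "exp (- real (a k) * (\<delta> k)^2 / (2 * (\<gamma> * P) * (P / real n))) \<le> exp (- (\<epsilon> ^ 2) / (4 * \<gamma>))"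
      by simp
    then have "fact n * exp (- real (a k) * (\<delta> k)^2 / (2 * (\<gamma> * P) * (P / real n))) \<le> fact n * exp (- (\<epsilon> ^ 2) / (4 * \<gamma>))"
      by (intro mult_left_mono) auto
    with BB show "(\<Sum>ls\<in>permutations_of_set {1..n}. if badl v (a k) (P / real n - \<delta> k) ls then 1 else 0 :: real)
       \<le> fact n * exp (- (\<epsilon> ^ 2) / (4 * \<gamma>))" by linarith
  qed
  define PS where "PS = {\<sigma>. \<sigma> permutes {1..n}}"
  define B where "B = (\<lambda>k. {\<sigma>\<in>PS. badl v (a k) (P / real n - \<delta> k) (map \<sigma> [1..<n+1])})"
  define E where "E = {\<sigma>. \<exists>t\<in>{1..n}. real t \<le> real n * (1 - \<epsilon>) \<and>
                 S_stat n f xs P \<sigma> t < - (P / real n) * 2 powr (- real_of_int (kappa n \<epsilon> t) / 2) * sqrt \<epsilon>}"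
  have incl: "PS \<inter> E \<subseteq> (\<Union>k\<in>{1..L}. B k)"
  proof
    fix \<sigma> assume sE: "\<sigma> \<in> PS \<inter> E"
    then have sp: "\<sigma> permutes {1..n}" by (auto simp: PS_def)
    from sE obtain t where t: "t \<in> {1..n}" "real t \<le> real n * (1 - \<epsilon>)"
      and St: "S_stat n f xs P \<sigma> t < - (P / real n) * 2 powr (- real_of_int (kappa n \<epsilon> t) / 2) * sqrt \<epsilon>"
      unfolding E_def by blast
    note kf = kappa_facts[OF n_pos eps(1) eps(2) L_def N0 t]
    define k where "k = nat (kappa n \<epsilon> t)"
    have kk: "real_of_int (kappa n \<epsilon> t) = real k" using kf(1) by (simp add: k_def)
    have kL: "k \<in> {1..L}" using kf(1,2) by (auto simp: k_def)
    have win: "a k \<le> n - t + 1" using kf(3) by (simp add: a_def k_def)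
    define ls where "ls = map \<sigma> [1..<n+1]"
    have len: "length ls = n" by (simp add: ls_def)
    have dr: "drop (t - 1) ls = map \<sigma> [t..<n+1]" using t by (simp add: ls_def drop_map)
    have sumeq: "sum_list (map v (drop (t-1) ls)) = (\<Sum>s\<in>{t..n}. real_of_ereal (f (\<sigma> s) (xs (\<sigma> s))))"
    proof -
      have "sum_list (map v (drop (t-1) ls)) = sum_list (map (v \<circ> \<sigma>) [t..<n+1])" by (simp only: dr map_map)
      also have "\<dots> = (\<Sum>s\<in>set [t..<n+1]. (v \<circ> \<sigma>) s)" by (rule interv_sum_list_conv_sum_set_nat)
      also have "set [t..<n+1] = {t..n}" by auto
      also have "(\<Sum>s\<in>{t..n}. (v \<circ> \<sigma>) s) = (\<Sum>s\<in>{t..n}. real_of_ereal (f (\<sigma> s) (xs (\<sigma> s))))"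
      proof (intro sum.cong refl)
        fix s assume "s \<in> {t..n}"
        then have "s \<in> {1..n}" using t by auto
        then have "\<sigma> s \<in> {1..n}" using permutes_in_image[OF sp] by simp
        then show "(v \<circ> \<sigma>) s = real_of_ereal (f (\<sigma> s) (xs (\<sigma> s)))" by (simp add: v_def)
      qed
      finally show ?thesis .
    qed
    define m where "m = real n - real t + 1"
    have mpos: "0 < m" using t by (simp add: m_def)
    have mn: "real (length ls - (t - 1)) = m" using t len by (simp add: m_def of_nat_diff)
    define Sm where "Sm = sum_list (map v (drop (t-1) ls))"
    have "S_stat n f xs P \<sigma> t = (1 / m) * Sm - P / real n"
    proof -
      have Sm_eq: "Sm = (\<Sum>s\<in>{t..n}. real_of_ereal (f (\<sigma> s) (xs (\<sigma> s))))" using sumeq Sm_def by simp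
      show ?thesis unfolding S_stat_def Sm_eq m_def by simp
    qed
    moreover have "- (P / real n) * 2 powr (- real_of_int (kappa n \<epsilon> t) / 2) * sqrt \<epsilon> = - \<delta> k"
      by (simp add: \<delta>_def kk)
    ultimately have "(1 / m) * Sm - P / real n < - \<delta> k" using St by simp
    then have "Sm / m < P / real n - \<delta> k" by simp
    then have Slt: "Sm < (P / real n - \<delta> k) * m" using mpos by (simp add: divide_less_eq)
    have "badl v (a k) (P / real n - \<delta> k) ls"
    proof (rule badl_drop[where j = "t - 1"])
      show "t - 1 < length ls" using t len by auto
      show "a k \<le> length ls - (t - 1)" using win t len by auto
      show "sum_list (map v (drop (t - 1) ls)) < (P / real n - \<delta> k) * real (length ls - (t - 1))"
        using Slt mn by (simp add: Sm_def)
    qed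
    then show "\<sigma> \<in> (\<Union>k\<in>{1..L}. B k)" using kL sE unfolding B_def ls_def by blast
  qed
  have finPS: "finite PS" unfolding PS_def by (rule finite_permutations) simp
  have cardPS: "card PS = fact n" unfolding PS_def by (rule card_permutations) auto
  have PSne: "PS \<noteq> {}" unfolding PS_def using permutes_id by blast
  have cardB: "\<And>k. k \<in> {1..L} \<Longrightarrow> real (card (B k)) \<le> fact n * exp (- (\<epsilon> ^ 2) / (4 * \<gamma>))"
  proof -
    fix k assume k: "k \<in> {1..L}"
    have "card (B k) \<le> card {ls\<in>permutations_of_set {1..n}. badl v (a k) (P / real n - \<delta> k) ls}"
    proof (rule card_inj_on_le[where f = "\<lambda>\<sigma>. map \<sigma> [1..<n+1]"])
      show "inj_on (\<lambda>\<sigma>. map \<sigma> [1..<n+1]) (B k)"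
        by (rule inj_on_subset[OF map_perm_inj[of n]]) (auto simp: B_def PS_def)
      show "(\<lambda>\<sigma>. map \<sigma> [1..<n+1]) ` B k \<subseteq> {ls\<in>permutations_of_set {1..n}. badl v (a k) (P / real n - \<delta> k) ls}"
        unfolding B_def PS_def using map_perm_in[of _ n] by blast
      show "finite {ls\<in>permutations_of_set {1..n}. badl v (a k) (P / real n - \<delta> k) ls}" by simp
    qed
    then have "real (card (B k)) \<le> real (card {ls\<in>permutations_of_set {1..n}. badl v (a k) (P / real n - \<delta> k) ls})"
      by simp
    also have "\<dots> = (\<Sum>ls\<in>permutations_of_set {1..n}. if badl v (a k) (P / real n - \<delta> k) ls then 1 else 0 :: real)"
      by (rule card_filter_sum) simp
    also have "\<dots> \<le> fact n * exp (- (\<epsilon> ^ 2) / (4 * \<gamma>))" by (rule bucket[OF k])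
    finally show "real (card (B k)) \<le> fact n * exp (- (\<epsilon> ^ 2) / (4 * \<gamma>))" .
  qed
  have "real (card (PS \<inter> E)) \<le> real (card (\<Union>k\<in>{1..L}. B k))"
    using incl by (intro of_nat_mono card_mono) (auto simp: B_def finPS)
  also have "\<dots> \<le> real (\<Sum>k\<in>{1..L}. card (B k))" by (intro of_nat_mono card_UN_le) simp
  also have "\<dots> = (\<Sum>k\<in>{1..L}. real (card (B k)))" by simp
  also have "\<dots> \<le> (\<Sum>k\<in>{1..L}. fact n * exp (- (\<epsilon> ^ 2) / (4 * \<gamma>)))" by (intro sum_mono cardB)
  also have "\<dots> = real L * (fact n * exp (- (\<epsilon> ^ 2) / (4 * \<gamma>)))" by simp
  finally have cnt: "real (card (PS \<inter> E)) \<le> real L * (fact n * exp (- (\<epsilon> ^ 2) / (4 * \<gamma>)))" .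
  have "measure_pmf.prob (pmf_of_set PS) E = real (card (PS \<inter> E)) / real (card PS)"
    by (rule measure_pmf_of_set[OF PSne finPS])
  also have "\<dots> = real (card (PS \<inter> E)) / fact n" using cardPS by simp
  also have "\<dots> \<le> real L * (fact n * exp (- (\<epsilon> ^ 2) / (4 * \<gamma>))) / fact n"
    by (rule divide_right_mono[OF cnt]) simp
  also have "\<dots> = real L * exp (- (\<epsilon> ^ 2) / (4 * \<gamma>))" by simp
  finally show ?thesis unfolding PS_def E_def .
qed


end
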